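(* Let $(a_k)_{k\ge1}$ be a sequence of natural numbers (all $a_k\ge1$), let $m,n\in\mathbb N$ and let $T=(i_1,\dots,i_m;\varepsilon_1,\dots,\varepsilon_m)$ with $i_r\in\{1,\dots,n\}$, $\varepsilon_r\in\{\pm1\}$. Then $$\mathrm{mult}(T)=\sum_{\substack{\varnothing\ne J\subseteq\min(\mathcal U_T)\\ \bigvee J=\hat1}}(-1)^{|J|+1}.$$
   Context: $\Pi_m$ denotes the set of partitions of $[m]=\{1,\dots,m\}$ into nonempty blocks, partially ordered by refinement ($\pi\le\sigma$ iff every block of $\pi$ is contained in a block of $\sigma$); $\hat1$ is the one-block partition $\{[m]\}$, and $\bigvee J$ denotes the join (least upper bound) of a family $J\subseteq\Pi_m$ in this lattice. $|\pi|$ is the number of blocks of $\pi$, and the Möbius function satisfies $\mu(\pi,\hat1)=(-1)^{|\pi|-1}(|\pi|-1)!$. For $B\subseteq[m]$ put $\Sigma(B;T)=\sum_{r\in B}\varepsilon_r a_{i_r}$. Let $\mathcal U_T=\{\pi\in\Pi_m:\Sigma(B;T)=0\text{ for every block }B\in\pi\}$, let $\min(\mathcal U_T)$ be the set of minimal elements of $\mathcal U_T$ with respect to $\le$, and define the multiplicity $\mathrm{mult}(T)=\sum_{\pi\in\mathcal U_T}\mu(\pi,\hat1)$. *)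

theory Defs
  imports Main "HOL-Library.Disjoint_Sets"
begin

definition Pi_m :: "nat \<Rightarrow> nat set set set" where
  "Pi_m m = {\<pi>. partition_on {1..m} \<pi>}"

definition refines :: "nat set set \<Rightarrow> nat set set \<Rightarrow> bool" where
  "refines \<pi> \<sigma> \<longleftrightarrow> (\<forall>B\<in>\<pi>. \<exists>C\<in>\<sigma>. B \<subseteq> C)"

text \<open>The top element: the one-block partition {[m]} (for m = 0 the unique partition, the empty one).\<close>
definition top_part :: "nat \<Rightarrow> nat set set" where
  "top_part m = {{1..m}} - {{}}"

definition part_join :: "nat \<Rightarrow> nat set set set \<Rightarrow> nat set set" where
  "part_join m J = (THE \<sigma>. \<sigma> \<in> Pi_m m \<and> (\<forall>\<pi>\<in>J. refines \<pi> \<sigma>) \<and>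
      (\<forall>\<tau>\<in>Pi_m m. (\<forall>\<pi>\<in>J. refines \<pi> \<tau>) \<longrightarrow> refines \<sigma> \<tau>))"

definition mobius_top :: "nat set set \<Rightarrow> int" where
  "mobius_top \<pi> = (-1) ^ (card \<pi> - 1) * fact (card \<pi> - 1)"

definition Sig :: "(nat \<Rightarrow> nat) \<Rightarrow> (nat \<Rightarrow> nat) \<Rightarrow> (nat \<Rightarrow> int) \<Rightarrow> nat set \<Rightarrow> int" where
  "Sig a i \<epsilon> B = (\<Sum>r\<in>B. \<epsilon> r * int (a (i r)))"

definition U_T :: "(nat \<Rightarrow> nat) \<Rightarrow> nat \<Rightarrow> (nat \<Rightarrow> nat) \<Rightarrow> (nat \<Rightarrow> int) \<Rightarrow> nat set set set" where
  "U_T a m i \<epsilon> = {\<pi> \<in> Pi_m m. \<forall>B\<in>\<pi>. Sig a i \<epsilon> B = 0}"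

definition min_U_T :: "(nat \<Rightarrow> nat) \<Rightarrow> nat \<Rightarrow> (nat \<Rightarrow> nat) \<Rightarrow> (nat \<Rightarrow> int) \<Rightarrow> nat set set set" where
  "min_U_T a m i \<epsilon> = {\<pi> \<in> U_T a m i \<epsilon>. \<forall>\<sigma>\<in>U_T a m i \<epsilon>. refines \<sigma> \<pi> \<longrightarrow> \<sigma> = \<pi>}"

definition mult :: "(nat \<Rightarrow> nat) \<Rightarrow> nat \<Rightarrow> (nat \<Rightarrow> nat) \<Rightarrow> (nat \<Rightarrow> int) \<Rightarrow> int" where
  "mult a m i \<epsilon> = (\<Sum>\<pi>\<in>U_T a m i \<epsilon>. mobius_top \<pi>)"

end

theory Submission
  imports Defs
begin

lemma part_remove:
  assumes "partition_on X P" "D \<in> P"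
  shows "partition_on (X - D) (P - {D})"
  using assms unfolding partition_on_def disjoint_def by blast

lemma part_blocks:
  assumes "partition_on X P" "C \<in> P"
  shows "C \<subseteq> X" "C \<noteq> {}" "\<And>E. E \<in> P \<Longrightarrow> E \<noteq> C \<Longrightarrow> E \<inter> C = {}"
  using assms unfolding partition_on_def disjoint_def by blast+

lemma part_insert:
  assumes "partition_on (X - D) P" "D \<subseteq> X" "D \<noteq> {}"
  shows "partition_on X (insert D P)"
proof -
  have "\<Union>P = X - D" using partition_onD1[OF assms(1)] by simp
  then have "disjnt D (\<Union>P)" by (auto simp: disjnt_def)
  then show ?thesis using partition_on_insert[of D P X] assms by simp
qed

lemma decomp:
  fixes F :: "nat \<Rightarrow> int"
  assumes fin: "finite A" and part: "partition_on A \<sigma>" and B\<sigma>: "B \<in> \<sigma>"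
  shows "(\<Sum>\<pi>\<in>{\<pi>. partition_on A \<pi> \<and> refines \<sigma> \<pi>}. F (card \<pi>)) =
         (\<Sum>\<pi>'\<in>{\<pi>'. partition_on (A - B) \<pi>' \<and> refines (\<sigma> - {B}) \<pi>'}.
              F (card \<pi>' + 1) + int (card \<pi>') * F (card \<pi>'))"
proof -
  define S where "S = {\<pi>. partition_on A \<pi> \<and> refines \<sigma> \<pi>}"
  define S' where "S' = {\<pi>'. partition_on (A - B) \<pi>' \<and> refines (\<sigma> - {B}) \<pi>'}"
  define ins1 where "ins1 = (\<lambda>\<pi>'. insert B (\<pi>'::nat set set))"
  define ins2 where "ins2 = (\<lambda>(\<pi>'::nat set set, D). insert (D \<union> B) (\<pi>' - {D}))"
  have Bsub: "B \<subseteq> A" and Bne: "B \<noteq> {}" using part_blocks[OF part B\<sigma>] by auto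
  have \<sigma>': "partition_on (A - B) (\<sigma> - {B})" using part_remove[OF part B\<sigma>] .
  have S'blk: "D \<subseteq> A - B" "D \<noteq> {}" if "\<pi>' \<in> S'" "D \<in> \<pi>'" for \<pi>' D
    using part_blocks[of "A - B" \<pi>' D] that unfolding S'_def by auto
  have finS': "finite S'"
    using finitely_many_partition_on[of "A - B"] fin unfolding S'_def
    by (auto intro: finite_subset)
  have finmem: "finite \<pi>'" if "\<pi>' \<in> S'" for \<pi>'
    using finite_elements[of "A - B" \<pi>'] fin that unfolding S'_def by auto
  have c1a: "ins1 ` S' \<subseteq> S"
  proof
    fix \<pi> assume "\<pi> \<in> ins1 ` S'"
    then obtain \<pi>' where p': "\<pi>' \<in> S'" and \<pi>: "\<pi> = insert B \<pi>'" unfolding ins1_def by auto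
    have "partition_on A \<pi>"
      unfolding \<pi> using part_insert[of A B \<pi>'] p' Bsub Bne unfolding S'_def by auto
    moreover have "refines \<sigma> \<pi>"
      using p' unfolding S'_def refines_def \<pi> by blast
    ultimately show "\<pi> \<in> S" unfolding S_def by auto
  qed
  have c1b: "ins2 ` (SIGMA \<pi>':S'. \<pi>') \<subseteq> S"
  proof
    fix \<pi> assume "\<pi> \<in> ins2 ` (SIGMA \<pi>':S'. \<pi>')"
    then obtain \<pi>' D where p': "\<pi>' \<in> S'" and D: "D \<in> \<pi>'" and \<pi>: "\<pi> = insert (D \<union> B) (\<pi>' - {D})"
      unfolding ins2_def by auto
    have pp: "partition_on (A - B) \<pi>'" using p' unfolding S'_def by auto
    have "partition_on ((A - B) - D) (\<pi>' - {D})" using part_remove[OF pp D] .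
    moreover have "(A - B) - D = A - (D \<union> B)" by auto
    ultimately have "partition_on A \<pi>"
      unfolding \<pi> using part_insert[of A "D \<union> B" "\<pi>' - {D}"] S'blk[OF p' D] Bsub by auto
    moreover have "refines \<sigma> \<pi>"
    proof (unfold refines_def, intro ballI)
      fix E assume E: "E \<in> \<sigma>"
      show "\<exists>C\<in>\<pi>. E \<subseteq> C"
      proof (cases "E = B")
        case True then show ?thesis unfolding \<pi> by auto
      next
        case False
        then obtain G where "G \<in> \<pi>'" "E \<subseteq> G" using p' E unfolding S'_def refines_def by blast
        then show ?thesis unfolding \<pi> by (cases "G = D") auto
      qed
    qed
    ultimately show "\<pi> \<in> S" unfolding S_def by auto
  qed
  have c1c: "S \<subseteq> ins1 ` S' \<union> ins2 ` (SIGMA \<pi>':S'. \<pi>')"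
  proof
    fix \<pi> assume "\<pi> \<in> S"
    then have pp: "partition_on A \<pi>" and rf: "refines \<sigma> \<pi>" unfolding S_def by auto
    show "\<pi> \<in> ins1 ` S' \<union> ins2 ` (SIGMA \<pi>':S'. \<pi>')"
    proof (cases "B \<in> \<pi>")
      case True
      have "\<pi> - {B} \<in> S'"
      proof -
        have "partition_on (A - B) (\<pi> - {B})" using part_remove[OF pp True] .
        moreover have "refines (\<sigma> - {B}) (\<pi> - {B})"
        proof (unfold refines_def, intro ballI)
          fix E assume E: "E \<in> \<sigma> - {B}"
          then obtain G where G: "G \<in> \<pi>" "E \<subseteq> G" using rf unfolding refines_def by blast
          have "E \<noteq> {}" using part_blocks(2)[OF part] E by blast
          moreover have "E \<inter> B = {}" using part_blocks(3)[OF part B\<sigma>] E by blast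
          ultimately have "E \<noteq> {}" "E \<inter> B = {}" by blast+
          then have "G \<noteq> B" using G by auto
          then show "\<exists>C\<in>\<pi> - {B}. E \<subseteq> C" using G by auto
        qed
        ultimately show ?thesis unfolding S'_def by auto
      qed
      moreover have "\<pi> = ins1 (\<pi> - {B})" unfolding ins1_def using True by auto
      ultimately have "\<pi> \<in> ins1 ` S'" by (simp add: image_eqI)
      then show ?thesis by (rule UnI1)
    next
      case False
      obtain C where C: "C \<in> \<pi>" "B \<subseteq> C" using rf B\<sigma> unfolding refines_def by blast
      define D where "D = C - B"
      have CB: "C \<noteq> B" using C False by auto
      have Dne: "D \<noteq> {}" using C CB unfolding D_def by auto
      have Cdisj: "E \<inter> C = {}" if "E \<in> \<pi>" "E \<noteq> C" for E using part_blocks(3)[OF pp C(1)] that by auto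
      have DnotIn: "D \<notin> \<pi> - {C}"
      proof
        assume "D \<in> \<pi> - {C}"
        then have "D \<inter> C = {}" using Cdisj by auto
        then show False using Dne unfolding D_def by auto
      qed
      define \<pi>' where "\<pi>' = insert D (\<pi> - {C})"
      have "partition_on (A - B) \<pi>'"
      proof -
        have "partition_on (A - C) (\<pi> - {C})" using part_remove[OF pp C(1)] .
        moreover have "(A - B) - D = A - C" using C part_blocks(1)[OF pp C(1)] unfolding D_def by auto
        moreover have "D \<subseteq> A - B" using part_blocks(1)[OF pp C(1)] unfolding D_def by auto
        ultimately show ?thesis unfolding \<pi>'_def using part_insert[of "A - B" D "\<pi> - {C}"] Dne by auto
      qed
      moreover have "refines (\<sigma> - {B}) \<pi>'"
      proof (unfold refines_def, intro ballI)
        fix E assume E: "E \<in> \<sigma> - {B}"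
        then obtain G where G: "G \<in> \<pi>" "E \<subseteq> G" using rf unfolding refines_def by blast
        have "E \<inter> B = {}" using part_blocks(3)[OF part B\<sigma>] E by blast
        then show "\<exists>C\<in>\<pi>'. E \<subseteq> C" using G unfolding \<pi>'_def D_def by (cases "G = C") auto
      qed
      ultimately have "\<pi>' \<in> S'" unfolding S'_def by auto
      moreover have "D \<in> \<pi>'" unfolding \<pi>'_def by auto
      moreover have "\<pi> = ins2 (\<pi>', D)"
      proof -
        have "D \<union> B = C" using C unfolding D_def by auto
        moreover have "\<pi>' - {D} = \<pi> - {C}" using DnotIn unfolding \<pi>'_def by auto
        ultimately show ?thesis unfolding ins2_def using C by auto
      qed
      ultimately have "\<pi> \<in> ins2 ` (SIGMA \<pi>':S'. \<pi>')" by (simp add: image_eqI)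
      then show ?thesis by (rule UnI2)
    qed
  qed
  have Seq: "S = ins1 ` S' \<union> ins2 ` (SIGMA \<pi>':S'. \<pi>')" by (intro equalityI c1c Un_least c1a c1b)
  have BnotS': "B \<notin> \<pi>'" if "\<pi>' \<in> S'" for \<pi>'
  proof
    assume "B \<in> \<pi>'"
    then have "B \<subseteq> A - B" using S'blk[OF that] by blast
    then show False using Bne by blast
  qed
  have notin: "D \<union> B \<notin> \<pi>'" if "\<pi>' \<in> S'" for \<pi>' D
  proof
    assume "D \<union> B \<in> \<pi>'"
    then have "D \<union> B \<subseteq> A - B" using S'blk[OF that] by blast
    then show False using Bne by blast
  qed
  have disj: "ins1 ` S' \<inter> ins2 ` (SIGMA \<pi>':S'. \<pi>') = {}"
  proof (rule ccontr)
    assume "ins1 ` S' \<inter> ins2 ` (SIGMA \<pi>':S'. \<pi>') \<noteq> {}"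
    then obtain \<pi> where "\<pi> \<in> ins1 ` S'" "\<pi> \<in> ins2 ` (SIGMA \<pi>':S'. \<pi>')" by blast
    then obtain \<pi>1 \<pi>2 D where p1: "\<pi>1 \<in> S'" and p2: "\<pi>2 \<in> S'" and D: "D \<in> \<pi>2"
      and eq: "insert B \<pi>1 = insert (D \<union> B) (\<pi>2 - {D})" unfolding ins1_def ins2_def by auto
    have "B \<in> insert (D \<union> B) (\<pi>2 - {D})" using eq by auto
    moreover have "B \<noteq> D \<union> B" using S'blk[OF p2 D] by auto
    ultimately show False using BnotS'[OF p2] by auto
  qed
  have inj1: "inj_on ins1 S'"
  proof (rule inj_onI)
    fix x y assume "x \<in> S'" "y \<in> S'" "ins1 x = ins1 y"
    then show "x = y" unfolding ins1_def using BnotS' by (metis Diff_insert_absorb)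
  qed
  have inj2: "inj_on ins2 (SIGMA \<pi>':S'. \<pi>')"
  proof (rule inj_onI)
    fix x y assume x: "x \<in> (SIGMA \<pi>':S'. \<pi>')" and y: "y \<in> (SIGMA \<pi>':S'. \<pi>')" and eq: "ins2 x = ins2 y"
    obtain \<pi>1 D1 where x': "x = (\<pi>1, D1)" "\<pi>1 \<in> S'" "D1 \<in> \<pi>1" using x by auto
    obtain \<pi>2 D2 where y': "y = (\<pi>2, D2)" "\<pi>2 \<in> S'" "D2 \<in> \<pi>2" using y by auto
    have e: "insert (D1 \<union> B) (\<pi>1 - {D1}) = insert (D2 \<union> B) (\<pi>2 - {D2})"
      using eq unfolding x' y' ins2_def by simp
    have n1: "D1 \<union> B \<notin> \<pi>1" using notin[OF x'(2)] .
    have n2: "D2 \<union> B \<notin> \<pi>2" using notin[OF y'(2)] .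
    have "D1 \<union> B \<in> insert (D1 \<union> B) (\<pi>1 - {D1})" by simp
    then have "D1 \<union> B \<in> insert (D2 \<union> B) (\<pi>2 - {D2})" unfolding e .
    then have "D1 \<union> B = D2 \<union> B \<or> D1 \<union> B \<in> \<pi>2" by blast
    then have "D1 \<union> B = D2 \<union> B" using notin[OF y'(2)] by blast
    moreover have "D1 = (D1 \<union> B) - B" using S'blk(1)[OF x'(2) x'(3)] by blast
    moreover have "D2 = (D2 \<union> B) - B" using S'blk(1)[OF y'(2) y'(3)] by blast
    ultimately have dd: "D1 = D2" by simp
    have "\<pi>1 - {D1} = \<pi>2 - {D2}"
    proof -
      have "\<pi>1 - {D1} = insert (D1 \<union> B) (\<pi>1 - {D1}) - {D1 \<union> B}" using n1 by auto
      also have "\<dots> = insert (D2 \<union> B) (\<pi>2 - {D2}) - {D2 \<union> B}" using e dd by simp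
      also have "\<dots> = \<pi>2 - {D2}" using n2 by auto
      finally show ?thesis .
    qed
    then have "\<pi>1 = \<pi>2" using dd x'(3) y'(3) by (metis insert_Diff)
    then show "x = y" using x' y' dd by simp
  qed
  have card1: "card (ins1 \<pi>') = card \<pi>' + 1" if "\<pi>' \<in> S'" for \<pi>'
    unfolding ins1_def using finmem[OF that] BnotS'[OF that] by simp
  have card2: "card (ins2 x) = card (fst x)" if xS: "x \<in> (SIGMA \<pi>':S'. \<pi>')" for x
  proof -
    obtain \<pi>' D where x': "x = (\<pi>', D)" "\<pi>' \<in> S'" "D \<in> \<pi>'" using xS by auto
    have n1: "D \<union> B \<notin> \<pi>'" using notin[OF x'(2)] .
    have "card (insert (D \<union> B) (\<pi>' - {D})) = card (\<pi>' - {D}) + 1"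
      using n1 finmem[OF x'(2)] by simp
    also have "\<dots> = card \<pi>'" using card_Suc_Diff1[OF finmem[OF x'(2)] x'(3)] by simp
    finally show ?thesis unfolding x' ins2_def by simp
  qed
  have finSig: "finite (SIGMA \<pi>':S'. \<pi>')" using finS' finmem by auto
  have e0: "(\<Sum>\<pi>\<in>S. F (card \<pi>)) = (\<Sum>\<pi>\<in>ins1 ` S'. F (card \<pi>)) + (\<Sum>\<pi>\<in>ins2 ` (SIGMA \<pi>':S'. \<pi>'). F (card \<pi>))"
    unfolding Seq using disj finS' finSig by (intro sum.union_disjoint) auto
  have e1: "(\<Sum>\<pi>\<in>ins1 ` S'. F (card \<pi>)) = (\<Sum>\<pi>'\<in>S'. F (card \<pi>' + 1))"
    using inj1 card1 by (simp add: sum.reindex)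
  have e2: "(\<Sum>\<pi>\<in>ins2 ` (SIGMA \<pi>':S'. \<pi>'). F (card \<pi>)) = (\<Sum>x\<in>(SIGMA \<pi>':S'. \<pi>'). F (card (fst x)))"
    using inj2 card2 by (simp add: sum.reindex)
  have e3: "(\<Sum>x\<in>(SIGMA \<pi>':S'. \<pi>'). F (card (fst x))) = (\<Sum>\<pi>'\<in>S'. \<Sum>D\<in>\<pi>'. F (card \<pi>'))"
    using finS' finmem by (subst sum.Sigma) (auto simp: case_prod_beta)
  have e4: "(\<Sum>\<pi>'\<in>S'. \<Sum>D\<in>\<pi>'. F (card \<pi>')) = (\<Sum>\<pi>'\<in>S'. int (card \<pi>') * F (card \<pi>'))" by simp
  have e5: "(\<Sum>\<pi>\<in>S. F (card \<pi>)) = (\<Sum>\<pi>'\<in>S'. F (card \<pi>' + 1) + int (card \<pi>') * F (card \<pi>'))"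
    unfolding e0 e1 e2 e3 e4 by (rule sum.distrib[symmetric])
  show ?thesis using e5 unfolding S_def S'_def by simp
qed


lemma Fstep:
  "(-1::int)^(c+1-1) * fact (c+1-1) + int c * ((-1)^(c-1) * fact (c-1)) = (if c = 0 then 1 else 0)"
proof (cases c)
  case 0 then show ?thesis by simp
next
  case (Suc k)
  have "fact (Suc k) = (int (Suc k)) * (fact k :: int)" by (simp add: fact_Suc)
  then show ?thesis using Suc by (simp add: algebra_simps)
qed

lemma mob_sum:
  assumes fin: "finite A" and part: "partition_on A \<sigma>"
  shows "(\<Sum>\<pi>\<in>{\<pi>. partition_on A \<pi> \<and> refines \<sigma> \<pi>}. mobius_top \<pi>) = (if card \<sigma> \<le> 1 then 1 else 0)"
proof (cases "\<sigma> = {}")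
  case True
  then have A0: "A = {}" using partition_onD1[OF part] by simp
  have "{\<pi>. partition_on A \<pi> \<and> refines \<sigma> \<pi>} = {{}}"
    using A0 True by (auto simp: partition_on_empty refines_def)
  then show ?thesis using True by (simp add: mobius_top_def)
next
  case False
  then obtain B where B\<sigma>: "B \<in> \<sigma>" by blast
  define F where "F = (\<lambda>j::nat. (-1::int)^(j-1) * fact (j-1))"
  define S' where "S' = {\<pi>'. partition_on (A - B) \<pi>' \<and> refines (\<sigma> - {B}) \<pi>'}"
  have mt: "mobius_top \<pi> = F (card \<pi>)" for \<pi> by (simp add: mobius_top_def F_def)
  have fin\<sigma>: "finite \<sigma>" using finite_elements[OF fin part] .
  have p\<sigma>': "partition_on (A - B) (\<sigma> - {B})" using part_remove[OF part B\<sigma>] .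
  have "(\<Sum>\<pi>\<in>{\<pi>. partition_on A \<pi> \<and> refines \<sigma> \<pi>}. mobius_top \<pi>)
      = (\<Sum>\<pi>\<in>{\<pi>. partition_on A \<pi> \<and> refines \<sigma> \<pi>}. F (card \<pi>))" by (simp add: mt)
  also have "\<dots> = (\<Sum>\<pi>'\<in>S'. F (card \<pi>' + 1) + int (card \<pi>') * F (card \<pi>'))"
    unfolding S'_def by (rule decomp[OF fin part B\<sigma>])
  also have "\<dots> = (\<Sum>\<pi>'\<in>S'. (if card \<pi>' = 0 then 1 else 0))"
    by (rule sum.cong[OF refl]) (simp only: F_def Fstep)
  also have "\<dots> = (if card \<sigma> \<le> 1 then 1 else 0)"
  proof (cases "A - B = {}")
    case True
    have "partition_on {} (\<sigma> - {B})" using p\<sigma>' unfolding True .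
    then have e: "\<sigma> - {B} = {}" by (simp only: partition_on_empty)
    have "{\<pi>'. partition_on {} \<pi>' \<and> refines {} \<pi>'} = {{}}" by (auto simp: partition_on_empty refines_def)
    then have "S' = {{}}" unfolding S'_def True e .
    moreover have "\<sigma> = {B}" using e B\<sigma> by auto
    ultimately show ?thesis by (simp only: sum.insert_if sum.empty finite.emptyI card.empty card_insert_if empty_iff finite_insert) simp
  next
    case False
    have "(\<Sum>\<pi>'\<in>S'. (if card \<pi>' = 0 then 1 else 0)) = (0::int)"
    proof (rule sum.neutral, rule ballI)
      fix \<pi>' assume "\<pi>' \<in> S'"
      then have pp: "partition_on (A - B) \<pi>'" unfolding S'_def by auto
      have "\<pi>' \<noteq> {}"
      proof
        assume "\<pi>' = {}"
        then have "A - B = {}" using partition_onD1[OF pp] by simp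
        then show False using False by simp
      qed
      moreover have "finite \<pi>'" using finite_elements[OF _ pp] fin by auto
      ultimately show "(if card \<pi>' = 0 then 1 else 0) = (0::int)" by simp
    qed
    moreover have "card \<sigma> \<ge> 2"
    proof -
      have "\<sigma> - {B} \<noteq> {}" using partition_onD1[OF p\<sigma>'] False by auto
      then have "card (\<sigma> - {B}) \<ge> 1" using fin\<sigma> by (simp add: Suc_leI card_gt_0_iff)
      then show "card \<sigma> \<ge> 2" using card_Suc_Diff1[OF fin\<sigma> B\<sigma>] by simp
    qed
    ultimately show ?thesis by simp
  qed
  finally show ?thesis .
qed

lemma refines_trans': "refines x y \<Longrightarrow> refines y z \<Longrightarrow> refines x z"
  unfolding Defs.refines_def by (meson subset_trans)

lemma refines_refl': "refines x x"
  unfolding Defs.refines_def by auto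

lemma refines_iff: "partition_on X x \<Longrightarrow> partition_on X y \<Longrightarrow> Disjoint_Sets.refines X x y \<longleftrightarrow> refines x y"
  by (simp add: Defs.refines_def Disjoint_Sets.refines_def)

lemma refines_antisym': "partition_on X x \<Longrightarrow> partition_on X y \<Longrightarrow> refines x y \<Longrightarrow> refines y x \<Longrightarrow> x = y"
  using Disjoint_Sets.refines_asym[of X x y] refines_iff[of X x y] refines_iff[of X y x] by blast

lemma finite_Pi: "finite (Pi_m m)"
  unfolding Pi_m_def using finitely_many_partition_on[of "{1..m}"] by simp

lemma top_in: "top_part m \<in> Pi_m m"
proof (cases "m = 0")
  case True then show ?thesis by (simp add: top_part_def Pi_m_def partition_on_empty)
next
  case False
  then have "{1..m} \<noteq> {}" by simp
  then have "top_part m = {{1..m}}" by (auto simp: top_part_def)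
  then show ?thesis using partition_on_space[OF \<open>{1..m} \<noteq> {}\<close>] by (simp add: Pi_m_def)
qed

lemma le_top: assumes "\<pi> \<in> Pi_m m" shows "refines \<pi> (top_part m)"
proof (cases "m = 0")
  case True then show ?thesis using assms by (simp add: Pi_m_def partition_on_empty refines_def)
next
  case False
  then have "top_part m = {{1..m}}" by (auto simp: top_part_def)
  moreover have "B \<subseteq> {1..m}" if "B \<in> \<pi>" for B using assms that partition_onD1[of "{1..m}" \<pi>]
    by (auto simp: Pi_m_def)
  ultimately show ?thesis unfolding refines_def by auto
qed

lemma join_props:
  assumes J: "J \<subseteq> Pi_m m"
  shows "part_join m J \<in> Pi_m m"
    and "\<And>\<tau>. \<tau> \<in> Pi_m m \<Longrightarrow> refines (part_join m J) \<tau> \<longleftrightarrow> (\<forall>\<pi>\<in>J. refines \<pi> \<tau>)"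
proof -
  define UB where "UB = {\<tau>\<in>Pi_m m. \<forall>\<pi>\<in>J. refines \<pi> \<tau>}"
  have topUB: "top_part m \<in> UB" unfolding UB_def using top_in le_top J by blast
  have UBne: "UB \<noteq> {}" using topUB by blast
  have UBp: "\<And>P. P \<in> UB \<Longrightarrow> partition_on {1..m} P" by (simp add: UB_def Pi_m_def)
  define j where "j = common_refinement UB"
  have jp: "partition_on {1..m} j" unfolding j_def by (rule partition_on_common_refinement[OF UBp UBne])
  have jub: "refines \<pi> j" if "\<pi> \<in> J" for \<pi>
  proof -
    have p\<pi>: "partition_on {1..m} \<pi>" using J that by (auto simp: Pi_m_def)
    have "Disjoint_Sets.refines {1..m} \<pi> j" unfolding j_def
    proof (rule common_refinement_coarsest[OF UBp p\<pi> _ UBne])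
      fix P assume "P \<in> UB"
      then show "Disjoint_Sets.refines {1..m} \<pi> P" using refines_iff[OF p\<pi> UBp[OF \<open>P \<in> UB\<close>]] that
        unfolding UB_def by blast
    qed
    then show ?thesis using refines_iff[OF p\<pi> jp] by blast
  qed
  have jleast: "refines j \<tau>" if "\<tau> \<in> UB" for \<tau>
    using refines_common_refinement[OF UBp that] refines_iff[OF jp UBp[OF that]] unfolding j_def by blast
  have jPi: "j \<in> Pi_m m" using jp by (simp add: Pi_m_def)
  have the: "part_join m J = j"
    unfolding part_join_def
  proof (rule the_equality)
    show "j \<in> Pi_m m \<and> (\<forall>\<pi>\<in>J. refines \<pi> j) \<and> (\<forall>\<tau>\<in>Pi_m m. (\<forall>\<pi>\<in>J. refines \<pi> \<tau>) \<longrightarrow> refines j \<tau>)"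
      using jPi jub jleast unfolding UB_def by blast
  next
    fix \<sigma> assume H: "\<sigma> \<in> Pi_m m \<and> (\<forall>\<pi>\<in>J. refines \<pi> \<sigma>) \<and> (\<forall>\<tau>\<in>Pi_m m. (\<forall>\<pi>\<in>J. refines \<pi> \<tau>) \<longrightarrow> refines \<sigma> \<tau>)"
    then have "refines \<sigma> j" using jPi jub by blast
    moreover have "refines j \<sigma>" using H jleast unfolding UB_def by blast
    moreover have "partition_on {1..m} \<sigma>" using H by (simp add: Pi_m_def)
    ultimately show "\<sigma> = j" using refines_antisym'[OF _ jp] by blast
  qed
  show "part_join m J \<in> Pi_m m" using the jPi by simp
  fix \<tau> assume \<tau>: "\<tau> \<in> Pi_m m"
  show "refines (part_join m J) \<tau> \<longleftrightarrow> (\<forall>\<pi>\<in>J. refines \<pi> \<tau>)"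
  proof
    assume "refines (part_join m J) \<tau>"
    then show "\<forall>\<pi>\<in>J. refines \<pi> \<tau>" using jub the refines_trans' by metis
  next
    assume "\<forall>\<pi>\<in>J. refines \<pi> \<tau>"
    then have "\<tau> \<in> UB" using \<tau> unfolding UB_def by blast
    then show "refines (part_join m J) \<tau>" using jleast the by simp
  qed
qed

lemma up_closed:
  assumes "\<pi> \<in> U_T a m i \<epsilon>" "\<tau> \<in> Pi_m m" "refines \<pi> \<tau>"
  shows "\<tau> \<in> U_T a m i \<epsilon>"
proof -
  have p\<pi>: "partition_on {1..m} \<pi>" using assms(1) by (simp add: U_T_def Pi_m_def)
  have p\<tau>: "partition_on {1..m} \<tau>" using assms(2) by (simp add: Pi_m_def)
  have R: "Disjoint_Sets.refines {1..m} \<pi> \<tau>" using refines_iff[OF p\<pi> p\<tau>] assms(3) by blast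
  have z: "Sig a i \<epsilon> B = 0" if "B \<in> \<pi>" for B using assms(1) that by (simp add: U_T_def)
  have "Sig a i \<epsilon> C = 0" if C: "C \<in> \<tau>" for C
  proof -
    have finC: "finite C" using partition_onD1[OF p\<tau>] C by (metis Union_upper finite_atLeastAtMost finite_subset)
    have pc: "partition_on C {p\<in>\<pi>. p \<subseteq> C}" by (rule refines_obtains_subset[OF R C])
    have "Sig a i \<epsilon> C = (\<Sum>B\<in>{p\<in>\<pi>. p \<subseteq> C}. Sig a i \<epsilon> B)"
      unfolding Sig_def by (rule sum.partition[OF finC pc])
    also have "\<dots> = 0" using z by simp
    finally show ?thesis .
  qed
  then show ?thesis using assms(2) by (simp add: U_T_def)
qed

lemma exists_min:
  assumes "\<pi> \<in> U_T a m i \<epsilon>"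
  shows "\<exists>\<mu>\<in>min_U_T a m i \<epsilon>. refines \<mu> \<pi>"
proof -
  define U where "U = U_T a m i \<epsilon>"
  have UP: "U \<subseteq> Pi_m m" unfolding U_def U_T_def by auto
  have finU: "finite U" using finite_subset[OF UP finite_Pi] .
  have Up: "partition_on {1..m} x" if "x \<in> U" for x using UP that by (auto simp: Pi_m_def)
  define R where "R = {(x,y). x \<in> U \<and> y \<in> U \<and> refines x y \<and> x \<noteq> y}"
  have finR: "finite R" using finite_subset[of R "U \<times> U"] finU unfolding R_def by auto
  have trR: "trans R"
  proof (rule transI)
    fix x y z assume "(x,y) \<in> R" "(y,z) \<in> R"
    then have h: "x \<in> U" "y \<in> U" "z \<in> U" "refines x y" "refines y z" "x \<noteq> y" unfolding R_def by auto
    have "refines x z" using h refines_trans' by blast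
    moreover have "x \<noteq> z"
    proof
      assume "x = z"
      then have "refines y x" using h by simp
      then have "x = y" using refines_antisym'[OF Up[OF h(1)] Up[OF h(2)] h(4)] by simp
      then show False using h by simp
    qed
    ultimately show "(x,z) \<in> R" using h unfolding R_def by auto
  qed
  have "irrefl R" unfolding R_def irrefl_def by auto
  then have "acyclic R" using trR by (simp add: acyclic_irrefl)
  then have wfR: "wf R" using finR by (simp add: finite_acyclic_wf)
  define Q where "Q = {\<sigma>\<in>U. refines \<sigma> \<pi>}"
  have "\<pi> \<in> Q" unfolding Q_def using assms refines_refl' U_def by simp
  then obtain z where zQ: "z \<in> Q" and zmin: "\<And>y. (y, z) \<in> R \<Longrightarrow> y \<notin> Q"
    using wfE_min[OF wfR] by metis
  have "z \<in> min_U_T a m i \<epsilon>"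
    unfolding min_U_T_def
  proof (intro CollectI conjI ballI impI)
    show "z \<in> U_T a m i \<epsilon>" using zQ unfolding Q_def U_def by simp
    fix \<sigma> assume \<sigma>: "\<sigma> \<in> U_T a m i \<epsilon>" and r: "refines \<sigma> z"
    show "\<sigma> = z"
    proof (rule ccontr)
      assume "\<sigma> \<noteq> z"
      then have "(\<sigma>, z) \<in> R" using \<sigma> r zQ unfolding R_def Q_def U_def by auto
      moreover have "\<sigma> \<in> Q" using \<sigma> r zQ refines_trans' unfolding Q_def U_def by blast
      ultimately show False using zmin by blast
    qed
  qed
  then show ?thesis using zQ unfolding Q_def by blast
qed

lemma U_char:
  assumes "\<pi> \<in> Pi_m m"
  shows "\<pi> \<in> U_T a m i \<epsilon> \<longleftrightarrow> (\<exists>\<mu>\<in>min_U_T a m i \<epsilon>. refines \<mu> \<pi>)"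
  using exists_min[of \<pi> a m i \<epsilon>] up_closed[of _ a m i \<epsilon> \<pi>] assms unfolding min_U_T_def by blast

lemma alt_pow:
  assumes "finite K"
  shows "(\<Sum>J\<in>Pow K. (-1::int) ^ card J) = (if K = {} then 1 else 0)"
proof -
  have "(\<Prod>x\<in>K. (1::int) - 1) = (\<Sum>X\<in>Pow K. (-1) ^ card X * (\<Prod>x\<in>X. 1) * (\<Prod>x\<in>K-X. 1))"
    by (rule prod_diff_conv_sum[OF assms])
  then have "(\<Sum>J\<in>Pow K. (-1::int) ^ card J) = (\<Prod>x\<in>K. (0::int))" by simp
  also have "\<dots> = (if K = {} then 1 else 0)" using assms by (simp add: card_gt_0_iff)
  finally show ?thesis .
qed

lemma incl_excl:
  assumes "finite K"
  shows "(\<Sum>J\<in>{J. J \<noteq> {} \<and> J \<subseteq> K}. (-1::int) ^ (card J + 1)) = (if K = {} then 0 else 1)"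
proof -
  have e: "{J. J \<noteq> {} \<and> J \<subseteq> K} = Pow K - {{}}" by auto
  have fin: "finite (Pow K)" using assms by simp
  have "(\<Sum>J\<in>Pow K. (-1::int) ^ (card J + 1)) = (\<Sum>J\<in>Pow K - {{}}. (-1::int) ^ (card J + 1)) + (-1) ^ (card ({}::'a set) + 1)"
    using sum.remove[OF fin, of "{}" "\<lambda>J. (-1::int) ^ (card J + 1)"] by simp
  moreover have "(\<Sum>J\<in>Pow K. (-1::int) ^ (card J + 1)) = - (\<Sum>J\<in>Pow K. (-1::int) ^ card J)"
    by (simp add: sum_negf[symmetric])
  ultimately have "(\<Sum>J\<in>Pow K - {{}}. (-1::int) ^ (card J + 1)) = 1 - (\<Sum>J\<in>Pow K. (-1::int) ^ card J)"
    by simp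
  then show ?thesis unfolding e alt_pow[OF assms] by simp
qed

lemma top_iff:
  assumes "\<sigma> \<in> Pi_m m"
  shows "card \<sigma> \<le> 1 \<longleftrightarrow> \<sigma> = top_part m"
proof
  have p: "partition_on {1..m} \<sigma>" using assms by (simp add: Pi_m_def)
  have fin: "finite \<sigma>" using finite_elements[OF _ p] by simp
  assume c: "card \<sigma> \<le> 1"
  show "\<sigma> = top_part m"
  proof (cases "card \<sigma> = 0")
    case True
    then have "\<sigma> = {}" using fin by simp
    then have "{1..m} = {}" using partition_onD1[OF p] by simp
    then have "m = 0" by simp
    then show ?thesis using \<open>\<sigma> = {}\<close> by (simp add: top_part_def)
  next
    case False
    then have "card \<sigma> = 1" using c by simp
    then obtain C where C: "\<sigma> = {C}" by (rule card_1_singletonE)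
    then have "C = {1..m}" using partition_onD1[OF p] by simp
    moreover have "C \<noteq> {}" using partition_onD3[OF p] C by auto
    ultimately show ?thesis using C by (auto simp: top_part_def)
  qed
next
  assume "\<sigma> = top_part m"
  moreover have "card (top_part m) \<le> card {{1..m}}" unfolding top_part_def by (rule card_mono) auto
  ultimately show "card \<sigma> \<le> 1" by simp
qed



theorem lemma5p2:
  fixes a :: "nat \<Rightarrow> nat" and m n :: nat and i :: "nat \<Rightarrow> nat" and \<epsilon> :: "nat \<Rightarrow> int"
  assumes "\<forall>k\<ge>1. a k \<ge> 1"
    and "\<forall>r\<in>{1..m}. i r \<in> {1..n}"
    and "\<forall>r\<in>{1..m}. \<epsilon> r = 1 \<or> \<epsilon> r = -1"
  shows "mult a m i \<epsilon> =
    (\<Sum>J\<in>{J. J \<noteq> {} \<and> J \<subseteq> min_U_T a m i \<epsilon> \<and> part_join m J = top_part m}.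
       (-1) ^ (card J + 1))"
proof -
  define P where "P = Pi_m m"
  define U where "U = U_T a m i \<epsilon>"
  define M where "M = min_U_T a m i \<epsilon>"
  define JJ where "JJ = {J. J \<noteq> {} \<and> J \<subseteq> M}"
  define s where "s = (\<lambda>J::nat set set set. (-1::int) ^ (card J + 1))"
  define ind where "ind = (\<lambda>J \<pi>. if refines (part_join m J) \<pi> then (1::int) else 0)"
  have finP: "finite P" unfolding P_def by (rule finite_Pi)
  have UP: "U \<subseteq> P" unfolding U_def P_def U_T_def by auto
  have MU: "M \<subseteq> U" unfolding M_def U_def min_U_T_def by auto
  have MP: "M \<subseteq> P" using MU UP by simp
  have finM: "finite M" using finite_subset[OF MP finP] .
  have finJJ: "finite JJ" unfolding JJ_def using finM by (auto intro: finite_subset[of _ "Pow M"])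
  have JP: "J \<subseteq> Pi_m m" if "J \<in> JJ" for J using that MP unfolding JJ_def P_def by auto
  have step1: "mult a m i \<epsilon> = (\<Sum>\<pi>\<in>P. mobius_top \<pi> * (if \<pi> \<in> U then 1 else 0))"
  proof -
    have "(\<Sum>\<pi>\<in>P. mobius_top \<pi> * (if \<pi> \<in> U then 1 else 0)) = (\<Sum>\<pi>\<in>P. if \<pi> \<in> U then mobius_top \<pi> else 0)"
      by (rule sum.cong) auto
    also have "\<dots> = sum mobius_top (P \<inter> U)" by (rule sum.inter_restrict[OF finP, symmetric])
    also have "P \<inter> U = U" using UP by auto
    finally show ?thesis unfolding mult_def U_def by simp
  qed
  have step2: "(if \<pi> \<in> U then 1 else 0) = (\<Sum>J\<in>JJ. s J * ind J \<pi>)" if \<pi>P: "\<pi> \<in> P" for \<pi>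
  proof -
    define K where "K = {x\<in>M. refines x \<pi>}"
    have finK: "finite K" unfolding K_def using finM by simp
    have "(\<Sum>J\<in>JJ. s J * ind J \<pi>) = (\<Sum>J\<in>JJ. if (\<forall>x\<in>J. refines x \<pi>) then s J else 0)"
    proof (rule sum.cong[OF refl])
      fix J assume "J \<in> JJ"
      then have "refines (part_join m J) \<pi> \<longleftrightarrow> (\<forall>x\<in>J. refines x \<pi>)"
        using join_props(2)[OF JP[OF \<open>J \<in> JJ\<close>]] \<pi>P unfolding P_def by blast
      then show "s J * ind J \<pi> = (if (\<forall>x\<in>J. refines x \<pi>) then s J else 0)" unfolding ind_def by simp
    qed
    also have "\<dots> = (\<Sum>J\<in>{J\<in>JJ. \<forall>x\<in>J. refines x \<pi>}. s J)"
      by (rule sum.inter_filter[OF finJJ, symmetric])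
    also have "{J\<in>JJ. \<forall>x\<in>J. refines x \<pi>} = {J. J \<noteq> {} \<and> J \<subseteq> K}"
      unfolding JJ_def K_def by auto
    also have "(\<Sum>J\<in>{J. J \<noteq> {} \<and> J \<subseteq> K}. s J) = (if K = {} then 0 else 1)"
      unfolding s_def by (rule incl_excl[OF finK])
    also have "(K = {}) \<longleftrightarrow> \<pi> \<notin> U"
      using U_char[of \<pi> m a i \<epsilon>] \<pi>P unfolding K_def M_def U_def P_def by blast
    finally show ?thesis by simp
  qed
  have step4: "(\<Sum>\<pi>\<in>P. mobius_top \<pi> * ind J \<pi>) = (if part_join m J = top_part m then 1 else 0)"
    if JJJ: "J \<in> JJ" for J
  proof -
    define \<sigma> where "\<sigma> = part_join m J"
    have \<sigma>P: "\<sigma> \<in> Pi_m m" unfolding \<sigma>_def using join_props(1)[OF JP[OF JJJ]] .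
    have "(\<Sum>\<pi>\<in>P. mobius_top \<pi> * ind J \<pi>) = (\<Sum>\<pi>\<in>P. if refines \<sigma> \<pi> then mobius_top \<pi> else 0)"
      unfolding ind_def \<sigma>_def by (rule sum.cong) auto
    also have "\<dots> = (\<Sum>\<pi>\<in>{\<pi>\<in>P. refines \<sigma> \<pi>}. mobius_top \<pi>)"
      by (rule sum.inter_filter[OF finP, symmetric])
    also have "{\<pi>\<in>P. refines \<sigma> \<pi>} = {\<pi>. partition_on {1..m} \<pi> \<and> refines \<sigma> \<pi>}"
      unfolding P_def Pi_m_def by auto
    also have "(\<Sum>\<pi>\<in>{\<pi>. partition_on {1..m} \<pi> \<and> refines \<sigma> \<pi>}. mobius_top \<pi>) = (if card \<sigma> \<le> 1 then 1 else 0)"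
      by (rule mob_sum) (use \<sigma>P in \<open>auto simp: Pi_m_def\<close>)
    also have "(card \<sigma> \<le> 1) = (\<sigma> = top_part m)" by (rule top_iff[OF \<sigma>P])
    finally show ?thesis unfolding \<sigma>_def .
  qed
  have "mult a m i \<epsilon> = (\<Sum>\<pi>\<in>P. mobius_top \<pi> * (\<Sum>J\<in>JJ. s J * ind J \<pi>))"
    unfolding step1 by (rule sum.cong[OF refl]) (simp add: step2)
  also have "\<dots> = (\<Sum>\<pi>\<in>P. \<Sum>J\<in>JJ. s J * (mobius_top \<pi> * ind J \<pi>))"
    by (simp add: sum_distrib_left algebra_simps)
  also have "\<dots> = (\<Sum>J\<in>JJ. \<Sum>\<pi>\<in>P. s J * (mobius_top \<pi> * ind J \<pi>))"
    by (rule sum.swap)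
  also have "\<dots> = (\<Sum>J\<in>JJ. s J * (\<Sum>\<pi>\<in>P. mobius_top \<pi> * ind J \<pi>))"
    by (simp add: sum_distrib_left)
  also have "\<dots> = (\<Sum>J\<in>JJ. if part_join m J = top_part m then s J else 0)"
    by (rule sum.cong[OF refl]) (simp add: step4)
  also have "\<dots> = (\<Sum>J\<in>{J\<in>JJ. part_join m J = top_part m}. s J)"
    by (rule sum.inter_filter[OF finJJ, symmetric])
  also have "{J\<in>JJ. part_join m J = top_part m} = {J. J \<noteq> {} \<and> J \<subseteq> min_U_T a m i \<epsilon> \<and> part_join m J = top_part m}"
    unfolding JJ_def M_def by auto
  finally show ?thesis unfolding s_def .
qed

end
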